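(* Let $(X_n)_{n\in\mathbb N}$ be a stationary process which is $\Theta,r$-multiple mixing with respect to $\mathcal G$, and let $p\in\mathbb N^*$ satisfy $\sum_{i=0}^\infty i^{p-1}\Theta(i)<\infty$. Then there is a constant $K_p<\infty$ such that $$I_n(p)\le K_p\sum_{i=1}^{\lceil p/2\rceil}n^{i-1}\|f(X_0)\|_r^i\|f\|_{\mathcal G}^i$$ for all $n\in\mathbb N^*$ and all $f\in\mathcal G$ with $\|f\|_\infty\le1$ and ${\rm E}f(X_0)=0$.
   Context: For integers $i_1,\dots,i_j$ write $i_j^*=i_1+\dots+i_j$. For fixed $f$ and $p\in\mathbb N^*$, $I_n(p)=\sum_{0\le i_1,\dots,i_p\le n-1,\ i_p^*\le n-1}\big|{\rm E}\big(f(X_0)f(X_{i_1^*})\cdots f(X_{i_p^*})\big)\big|$. $\mathcal G$ is a class of measurable real functions on $\mathbb R^d$ with a seminorm $\|\cdot\|_{\mathcal G}$; $\|\cdot\|_r$ is the $L^r$ norm. Multiple mixing: $(X_i)$ is $\Theta,r$-multiple mixing with respect to $\mathcal G$ if $r\in[1,\infty)$, $\Theta:\mathbb N\to\mathbb R_0^+$ is nonincreasing, and for every $p\in\mathbb N^*$ there is $K_p<\infty$ such that $\big|{\rm Cov}\big(f(X_0)f(X_{i_1^*})\cdots f(X_{i_{q-1}^*}),\,f(X_{i_q^*})\cdots f(X_{i_p^*})\big)\big|\le K_p\|f(X_0)\|_r\|f\|_{\mathcal G}\Theta(i_q)$ for all $f\in\mathcal G$ with $\|f\|_\infty\le1$ and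 ${\rm E}f(X_0)=0$, all $i_1,\dots,i_p\in\mathbb N$, $q\in\{1,\dots,p\}$. *)

theory Defs
  imports "HOL-Probability.Probability"
begin

definition istar :: "(nat \<Rightarrow> nat) \<Rightarrow> nat \<Rightarrow> nat" where
  "istar i j = (\<Sum>k\<in>{1..j}. i k)"

definition Lr_norm :: "'w measure \<Rightarrow> real \<Rightarrow> ('w \<Rightarrow> real) \<Rightarrow> real" where
  "Lr_norm M r Y = (\<integral>\<omega>. \<bar>Y \<omega>\<bar> powr r \<partial>M) powr (1 / r)"

definition cov :: "'w measure \<Rightarrow> ('w \<Rightarrow> real) \<Rightarrow> ('w \<Rightarrow> real) \<Rightarrow> real" where
  "cov M A B = (\<integral>\<omega>. A \<omega> * B \<omega> \<partial>M) - (\<integral>\<omega>. A \<omega> \<partial>M) * (\<integral>\<omega>. B \<omega> \<partial>M)"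

definition stationary :: "'w measure \<Rightarrow> (nat \<Rightarrow> 'w \<Rightarrow> 'e::euclidean_space) \<Rightarrow> bool" where
  "stationary M X \<longleftrightarrow> (\<forall>m k.
     distr M (PiM {..m} (\<lambda>_. borel)) (\<lambda>\<omega>. \<lambda>i\<in>{..m}. X (k + i) \<omega>) =
     distr M (PiM {..m} (\<lambda>_. borel)) (\<lambda>\<omega>. \<lambda>i\<in>{..m}. X i \<omega>))"

definition admissible :: "'w measure \<Rightarrow> (nat \<Rightarrow> 'w \<Rightarrow> 'e) \<Rightarrow> ('e \<Rightarrow> real) set \<Rightarrow> ('e \<Rightarrow> real) \<Rightarrow> bool" where
  "admissible M X G f \<longleftrightarrow> f \<in> G \<and> (\<forall>x. \<bar>f x\<bar> \<le> 1) \<and> (\<integral>\<omega>. f (X 0 \<omega>) \<partial>M) = 0"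

definition multiple_mixing ::
  "'w measure \<Rightarrow> (nat \<Rightarrow> 'w \<Rightarrow> 'e) \<Rightarrow> ('e \<Rightarrow> real) set \<Rightarrow> (('e \<Rightarrow> real) \<Rightarrow> real)
    \<Rightarrow> (nat \<Rightarrow> real) \<Rightarrow> real \<Rightarrow> bool" where
  "multiple_mixing M X G normG \<Theta> r \<longleftrightarrow>
     1 \<le> r \<and> (\<forall>k. 0 \<le> \<Theta> k) \<and> antimono \<Theta> \<and>
     (\<forall>p\<ge>1. \<exists>K::real. \<forall>f i q. admissible M X G f \<longrightarrow> q \<in> {1..p} \<longrightarrow>
        \<bar>cov M (\<lambda>\<omega>. \<Prod>j\<in>{0..<q}. f (X (istar i j) \<omega>))
               (\<lambda>\<omega>. \<Prod>j\<in>{q..p}. f (X (istar i j) \<omega>))\<bar>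
        \<le> K * Lr_norm M r (\<lambda>\<omega>. f (X 0 \<omega>)) * normG f * \<Theta> (i q))"

definition I_sum :: "'w measure \<Rightarrow> (nat \<Rightarrow> 'w \<Rightarrow> 'e) \<Rightarrow> ('e \<Rightarrow> real) \<Rightarrow> nat \<Rightarrow> nat \<Rightarrow> real" where
  "I_sum M X f n p =
     (\<Sum>i\<in>{i \<in> PiE {1..p} (\<lambda>_. {..<n}). istar i p \<le> n - 1}.
        \<bar>\<integral>\<omega>. (\<Prod>j\<in>{0..p}. f (X (istar i j) \<omega>)) \<partial>M\<bar>)"

end

theory Submission
  imports Defs
begin

lemma sum_PiE_split:
  fixes h1 h2 :: "(nat \<Rightarrow> 'b) \<Rightarrow> real"
  assumes fin: "finite N" and q: "1 \<le> q" "q \<le> a"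
  shows "(\<Sum>i\<in>PiE {1..a} (\<lambda>_. N). h1 (restrict i {1..q-1}) * h2 (\<lambda>k\<in>{1..a-q}. i (q+k)))
       = real (card N) * (\<Sum>u\<in>PiE {1..q-1} (\<lambda>_. N). h1 u) * (\<Sum>v\<in>PiE {1..a-q} (\<lambda>_. N). h2 v)"
proof -
  define A where "A = PiE {1..q-1} (\<lambda>_. N) \<times> N \<times> PiE {1..a-q} (\<lambda>_. N)"
  define \<phi> where "\<phi> = (\<lambda>(u::nat\<Rightarrow>'b, x::'b, v::nat\<Rightarrow>'b). \<lambda>k. if k \<in> {1..q-1} then u k else if k = q then x
      else if k \<in> {q+1..a} then v (k - q) else undefined)"
  define \<psi> where "\<psi> = (\<lambda>i::nat\<Rightarrow>'b. (restrict i {1..q-1}, i q, \<lambda>k\<in>{1..a-q}. i (q+k)))"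
  have inv1: "\<psi> (\<phi> z) = z" if "z \<in> A" for z
  proof -
    obtain u x v where z: "z = (u,x,v)" by (cases z) auto
    have u: "u \<in> PiE {1..q-1} (\<lambda>_. N)" and v: "v \<in> PiE {1..a-q} (\<lambda>_. N)" using that z A_def by auto
    have "restrict (\<phi> z) {1..q-1} = u"
    proof
      fix k show "restrict (\<phi> z) {1..q-1} k = u k"
        using PiE_arb[OF u, of k] by (simp add: z \<phi>_def)
    qed
    moreover have "(\<lambda>k\<in>{1..a-q}. \<phi> z (q+k)) = v"
    proof
      fix k show "(\<lambda>k\<in>{1..a-q}. \<phi> z (q+k)) k = v k"
        using PiE_arb[OF v, of k] q by (simp add: z \<phi>_def)
    qed
    moreover have "\<phi> z q = x" using q by (auto simp: z \<phi>_def)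
    ultimately show ?thesis by (simp add: \<psi>_def z)
  qed
  have inv2: "\<phi> (\<psi> i) = i" if "i \<in> PiE {1..a} (\<lambda>_. N)" for i
  proof
    fix k show "\<phi> (\<psi> i) k = i k"
      using PiE_arb[OF that, of k] q by (auto simp: \<phi>_def \<psi>_def)
  qed
  have im1: "\<phi> ` A \<subseteq> PiE {1..a} (\<lambda>_. N)"
  proof
    fix y assume "y \<in> \<phi> ` A"
    then obtain u x v where y: "y = \<phi> (u,x,v)" and u: "u \<in> PiE {1..q-1} (\<lambda>_. N)"
      and x: "x \<in> N" and v: "v \<in> PiE {1..a-q} (\<lambda>_. N)" by (auto simp: A_def)
    show "y \<in> PiE {1..a} (\<lambda>_. N)"
    proof (rule PiE_I)
      fix k assume k: "k \<in> {1..a}"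
      show "y k \<in> N"
      proof (cases "k \<in> {q+1..a}")
        case True
        then have "k - q \<in> {1..a-q}" by auto
        then have "v (k-q) \<in> N" using v by auto
        then show ?thesis using True x u by (auto simp: y \<phi>_def)
      qed (use k x u in \<open>auto simp: y \<phi>_def\<close>)
    next
      fix k assume "k \<notin> {1..a}" then show "y k = undefined" using q by (auto simp: y \<phi>_def)
    qed
  qed
  have im2: "\<psi> ` PiE {1..a} (\<lambda>_. N) \<subseteq> A"
    using q by (auto simp: A_def \<psi>_def PiE_iff)
  have bij: "bij_betw \<phi> A (PiE {1..a} (\<lambda>_. N))"
    by (rule bij_betw_byWitness[where f'=\<psi>]) (use inv1 inv2 im1 im2 in auto)
  have "(\<Sum>i\<in>PiE {1..a} (\<lambda>_. N). h1 (restrict i {1..q-1}) * h2 (\<lambda>k\<in>{1..a-q}. i (q+k)))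
      = (\<Sum>z\<in>A. h1 (restrict (\<phi> z) {1..q-1}) * h2 (\<lambda>k\<in>{1..a-q}. \<phi> z (q+k)))"
    by (rule sum.reindex_bij_betw[OF bij, symmetric])
  also have "\<dots> = (\<Sum>z\<in>A. h1 (fst z) * h2 (snd (snd z)))"
    by (rule sum.cong) (use inv1 in \<open>auto simp: \<psi>_def\<close>)
  also have "\<dots> = (\<Sum>u\<in>PiE {1..q-1} (\<lambda>_. N). \<Sum>x\<in>N. \<Sum>v\<in>PiE {1..a-q} (\<lambda>_. N). h1 u * h2 v)"
    unfolding A_def sum.cartesian_product by (simp add: case_prod_beta)
  also have "\<dots> = real (card N) * (\<Sum>u\<in>PiE {1..q-1} (\<lambda>_. N). h1 u) * (\<Sum>v\<in>PiE {1..a-q} (\<lambda>_. N). h2 v)"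
    by (simp add: sum_distrib_left sum_distrib_right mult_ac)
  finally show ?thesis .
qed

definition Tm :: "'w measure \<Rightarrow> (nat \<Rightarrow> 'w \<Rightarrow> 'e) \<Rightarrow> ('e \<Rightarrow> real) \<Rightarrow> nat \<Rightarrow> (nat \<Rightarrow> nat) \<Rightarrow> real" where
  "Tm M X f a i = \<bar>\<integral>\<omega>. (\<Prod>j\<in>{0..a}. f (X (istar i j) \<omega>)) \<partial>M\<bar>"

definition Bx :: "'w measure \<Rightarrow> (nat \<Rightarrow> 'w \<Rightarrow> 'e) \<Rightarrow> ('e \<Rightarrow> real) \<Rightarrow> nat \<Rightarrow> nat \<Rightarrow> real" where
  "Bx M X f a n = (\<Sum>i\<in>PiE {1..a} (\<lambda>_. {..<n}). Tm M X f a i)"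

definition Sb :: "real \<Rightarrow> nat \<Rightarrow> nat \<Rightarrow> real" where
  "Sb c a n = (\<Sum>k\<in>{1..(a+1) div 2}. real n ^ (k-1) * c ^ k)"

lemma nat_ceil_half: "nat \<lceil>real m / 2\<rceil> = (m+1) div 2"
proof (cases "even m")
  case True then obtain t where "m = 2*t" by auto
  then show ?thesis by simp
next
  case False then obtain t where t: "m = 2*t+1" using oddE by blast
  have "\<lceil>real m / 2\<rceil> = int t + 1"
    unfolding t by (intro ceiling_unique) auto
  then show ?thesis using t by simp
qed

lemma Sb_nonneg: "0 \<le> c \<Longrightarrow> 0 \<le> Sb c a n"
  unfolding Sb_def by (intro sum_nonneg) auto

lemma Sb_ge_c: "0 \<le> c \<Longrightarrow> 1 \<le> a \<Longrightarrow> c \<le> Sb c a n"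
proof -
  assume c: "0 \<le> c" and a: "1 \<le> a"
  have "real n ^ (1-1) * c ^ 1 \<le> Sb c a n"
    unfolding Sb_def using a c by (intro member_le_sum) auto
  then show ?thesis by simp
qed

lemma Sb_prod:
  assumes c: "0 \<le> c" and abd: "b + d + 1 = a"
  shows "real n * Sb c b n * Sb c d n \<le> real (((b+1) div 2) * ((d+1) div 2)) * Sb c a n"
proof -
  have trm: "real n ^ (j-1) * c^j \<le> Sb c a n" if "j \<in> {1..(a+1) div 2}" for j
    unfolding Sb_def using that c by (intro member_le_sum) auto
  have "real n * Sb c b n * Sb c d n
      = (\<Sum>k\<in>{1..(b+1) div 2}. \<Sum>l\<in>{1..(d+1) div 2}. real n * (real n ^ (k-1) * c ^ k) * (real n ^ (l-1) * c ^ l))"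
    unfolding Sb_def by (simp add: sum_distrib_left sum_distrib_right mult_ac)
  also have "\<dots> = (\<Sum>k\<in>{1..(b+1) div 2}. \<Sum>l\<in>{1..(d+1) div 2}. real n ^ ((k+l)-1) * c ^ (k+l))"
  proof (intro sum.cong refl)
    fix k l assume k: "k \<in> {1..(b+1) div 2}" and l: "l \<in> {1..(d+1) div 2}"
    have e: "k + l - 1 = 1 + (k-1) + (l-1)" using k l by auto
    show "real n * (real n ^ (k-1) * c ^ k) * (real n ^ (l-1) * c ^ l) = real n ^ ((k+l)-1) * c ^ (k+l)"
      unfolding e power_add by (simp add: mult_ac)
  qed
  also have "\<dots> \<le> (\<Sum>k\<in>{1..(b+1) div 2}. \<Sum>l\<in>{1..(d+1) div 2}. Sb c a n)"
  proof (intro sum_mono trm)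
    fix k l assume k: "k \<in> {1..(b+1) div 2}" and l: "l \<in> {1..(d+1) div 2}"
    show "k + l \<in> {1..(a+1) div 2}" using k l abd by auto
  qed
  also have "\<dots> = real (((b+1) div 2) * ((d+1) div 2)) * Sb c a n" by simp
  finally show ?thesis .
qed

lemma stat_int:
  fixes X :: "nat \<Rightarrow> 'w \<Rightarrow> 'e::euclidean_space" and f :: "'e \<Rightarrow> real"
  assumes st: "stationary M X" and X: "\<And>k. X k \<in> borel_measurable M"
    and f: "f \<in> borel_measurable borel" and s: "\<And>j. j \<le> m' \<Longrightarrow> s j \<le> m"
  shows "(\<integral>\<omega>. (\<Prod>j\<in>{0..m'}. f (X (k + s j) \<omega>)) \<partial>M) = (\<integral>\<omega>. (\<Prod>j\<in>{0..m'}. f (X (s j) \<omega>)) \<partial>M)"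
proof -
  define G where "G = (\<lambda>y::nat \<Rightarrow> 'e. \<Prod>j\<in>{0..m'}. f (y (s j)))"
  have Gm: "G \<in> borel_measurable (PiM {..m} (\<lambda>_. borel))"
    unfolding G_def
  proof (rule borel_measurable_prod[where f="\<lambda>j y. f (y (s j))"])
    fix j assume "j \<in> {0..m'}"
    then have "s j \<in> {..m}" using s by auto
    then show "(\<lambda>y. f (y (s j))) \<in> borel_measurable (PiM {..m} (\<lambda>_. borel))"
      using measurable_compose[OF measurable_component_singleton[of "s j" "{..m}" "\<lambda>_. borel"] f] by simp
  qed
  have m1: "(\<lambda>\<omega>. \<lambda>l\<in>{..m}. X (k+l) \<omega>) \<in> measurable M (PiM {..m} (\<lambda>_. borel))"
    by (rule measurable_restrict) (use X in auto)
  have m0: "(\<lambda>\<omega>. \<lambda>l\<in>{..m}. X l \<omega>) \<in> measurable M (PiM {..m} (\<lambda>_. borel))"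
    by (rule measurable_restrict) (use X in auto)
  have "(\<integral>\<omega>. G (\<lambda>l\<in>{..m}. X (k+l) \<omega>) \<partial>M) = (\<integral>y. G y \<partial>distr M (PiM {..m} (\<lambda>_. borel)) (\<lambda>\<omega>. \<lambda>l\<in>{..m}. X (k+l) \<omega>))"
    by (rule integral_distr[OF m1 Gm, symmetric])
  also have "\<dots> = (\<integral>y. G y \<partial>distr M (PiM {..m} (\<lambda>_. borel)) (\<lambda>\<omega>. \<lambda>l\<in>{..m}. X l \<omega>))"
    using st unfolding stationary_def by metis
  also have "\<dots> = (\<integral>\<omega>. G (\<lambda>l\<in>{..m}. X l \<omega>) \<partial>M)"
    by (rule integral_distr[OF m0 Gm])
  finally have eq: "(\<integral>\<omega>. G (\<lambda>l\<in>{..m}. X (k+l) \<omega>) \<partial>M) = (\<integral>\<omega>. G (\<lambda>l\<in>{..m}. X l \<omega>) \<partial>M)" .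
  have e1: "G (\<lambda>l\<in>{..m}. X (k+l) \<omega>) = (\<Prod>j\<in>{0..m'}. f (X (k + s j) \<omega>))" for \<omega>
    unfolding G_def using s by (intro prod.cong) auto
  have e0: "G (\<lambda>l\<in>{..m}. X l \<omega>) = (\<Prod>j\<in>{0..m'}. f (X (s j) \<omega>))" for \<omega>
    unfolding G_def using s by (intro prod.cong) auto
  show ?thesis using eq unfolding e1 e0 .
qed

lemma istar_restrict: "j \<le> q - 1 \<Longrightarrow> istar (restrict i {1..q-1}) j = istar i j"
  unfolding istar_def by (intro sum.cong) auto

lemma istar_shift:
  assumes "j \<le> a - q"
  shows "istar i (q + j) = istar i q + istar (\<lambda>k\<in>{1..a-q}. i (q+k)) j"
proof -
  have "istar i (q + j) = sum i {1..q} + sum i {q+1..q+j}"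
    unfolding istar_def by (rule sum.ub_add_nat) simp
  also have "sum i {q+1..q+j} = sum i {1+q..j+q}" by (simp add: add.commute)
  also have "\<dots> = (\<Sum>k\<in>{1..j}. i (k+q))" by (rule sum.shift_bounds_cl_nat_ivl)
  also have "\<dots> = istar (\<lambda>k\<in>{1..a-q}. i (q+k)) j"
    unfolding istar_def using assms by (intro sum.cong) (auto simp: add.commute)
  finally show ?thesis unfolding istar_def by simp
qed

lemma istar_mono: "j \<le> j' \<Longrightarrow> istar i j \<le> istar i j'"
  unfolding istar_def by (intro sum_mono2) auto

lemma EA:
  assumes "1 \<le> q"
  shows "\<bar>\<integral>\<omega>. (\<Prod>j\<in>{0..<q}. f (X (istar i j) \<omega>)) \<partial>M\<bar> = Tm M X f (q-1) (restrict i {1..q-1})"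
proof -
  have "{0..<q} = {0..q-1}" using assms by auto
  moreover have r: "istar (restrict i {1..q-1}) j = istar i j" if "j \<in> {0..q-1}" for j
    by (rule istar_restrict) (use that in auto)
  ultimately have "(\<Prod>j\<in>{0..<q}. f (X (istar i j) \<omega>)) = (\<Prod>j\<in>{0..q-1}. f (X (istar (restrict i {1..q-1}) j) \<omega>))" for \<omega>
  proof (intro prod.cong)
    fix j assume "j \<in> {0..q-1}"
    from r[OF this] show "f (X (istar i j) \<omega>) = f (X (istar (restrict i {1..q-1}) j) \<omega>)" by simp
  qed
  then show ?thesis unfolding Tm_def by simp
qed

lemma EB:
  fixes X :: "nat \<Rightarrow> 'w \<Rightarrow> 'e::euclidean_space" and f :: "'e \<Rightarrow> real"
  assumes st: "stationary M X" and X: "\<And>k. X k \<in> borel_measurable M"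
    and f: "f \<in> borel_measurable borel" and q: "q \<le> a"
  shows "\<bar>\<integral>\<omega>. (\<Prod>j\<in>{q..a}. f (X (istar i j) \<omega>)) \<partial>M\<bar> = Tm M X f (a-q) (\<lambda>k\<in>{1..a-q}. i (q+k))"
proof -
  define sh where "sh = (\<lambda>k\<in>{1..a-q}. i (q+k))"
  have "(\<Prod>j\<in>{q..a}. f (X (istar i j) \<omega>)) = (\<Prod>j\<in>{0+q..(a-q)+q}. f (X (istar i j) \<omega>))" for \<omega>
    using q by simp
  also have "\<dots> \<omega> = (\<Prod>j\<in>{0..a-q}. f (X (istar i (j+q)) \<omega>))" for \<omega>
    by (rule prod.shift_bounds_cl_nat_ivl)
  also have "\<dots> \<omega> = (\<Prod>j\<in>{0..a-q}. f (X (istar i q + istar sh j) \<omega>))" for \<omega>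
    unfolding sh_def by (intro prod.cong refl) (auto simp: add.commute[of _ q] istar_shift)
  finally have e: "(\<Prod>j\<in>{q..a}. f (X (istar i j) \<omega>)) = (\<Prod>j\<in>{0..a-q}. f (X (istar i q + istar sh j) \<omega>))" for \<omega> .
  have "(\<integral>\<omega>. (\<Prod>j\<in>{0..a-q}. f (X (istar i q + istar sh j) \<omega>)) \<partial>M)
      = (\<integral>\<omega>. (\<Prod>j\<in>{0..a-q}. f (X (istar sh j) \<omega>)) \<partial>M)"
    by (rule stat_int[OF st X f, where m="istar sh (a-q)"]) (rule istar_mono)
  then show ?thesis unfolding Tm_def e sh_def by simp
qed

lemma per_tuple:
  fixes X :: "nat \<Rightarrow> 'w \<Rightarrow> 'e::euclidean_space" and f :: "'e \<Rightarrow> real" and \<Theta> :: "nat \<Rightarrow> real"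
  assumes st: "stationary M X" and X: "\<And>k. X k \<in> borel_measurable M"
    and fm: "f \<in> borel_measurable borel" and a: "1 \<le> a" and c: "0 \<le> c" and \<Theta>0: "\<And>k. 0 \<le> \<Theta> k"
    and cv: "\<And>q. q \<in> {1..a} \<Longrightarrow> \<bar>cov M (\<lambda>\<omega>. \<Prod>j\<in>{0..<q}. f (X (istar i j) \<omega>)) (\<lambda>\<omega>. \<Prod>j\<in>{q..a}. f (X (istar i j) \<omega>))\<bar>
        \<le> Km * c * \<Theta> (i q)"
  shows "Tm M X f a i \<le> \<bar>Km\<bar> * c * \<Theta> (Max (i ` {1..a}))
     + (\<Sum>q\<in>{1..a}. Tm M X f (q-1) (restrict i {1..q-1}) * Tm M X f (a-q) (\<lambda>k\<in>{1..a-q}. i (q+k)))"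
proof -
  have "Max (i ` {1..a}) \<in> i ` {1..a}" using a by (intro Max_in) auto
  then obtain q where q: "q \<in> {1..a}" and iq: "i q = Max (i ` {1..a})" by auto
  define A where "A = (\<lambda>\<omega>. \<Prod>j\<in>{0..<q}. f (X (istar i j) \<omega>))"
  define B where "B = (\<lambda>\<omega>. \<Prod>j\<in>{q..a}. f (X (istar i j) \<omega>))"
  have AB: "(\<Prod>j\<in>{0..a}. f (X (istar i j) \<omega>)) = A \<omega> * B \<omega>" for \<omega>
  proof -
    have e: "{0..a} = {0..<Suc a}" "{q..a} = {q..<Suc a}" by auto
    show ?thesis unfolding A_def B_def e by (rule prod.atLeastLessThan_concat[symmetric]) (use q in auto)
  qed
  have eA: "\<bar>\<integral>\<omega>. A \<omega> \<partial>M\<bar> = Tm M X f (q-1) (restrict i {1..q-1})"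
    unfolding A_def using q by (intro EA) auto
  have eB: "\<bar>\<integral>\<omega>. B \<omega> \<partial>M\<bar> = Tm M X f (a-q) (\<lambda>k\<in>{1..a-q}. i (q+k))"
    unfolding B_def using q by (intro EB[OF st X fm]) auto
  have cvq: "\<bar>cov M A B\<bar> \<le> \<bar>Km\<bar> * c * \<Theta> (Max (i ` {1..a}))"
  proof -
    have "\<bar>cov M A B\<bar> \<le> Km * c * \<Theta> (i q)" using cv[OF q] unfolding A_def B_def .
    also have "\<dots> \<le> \<bar>Km\<bar> * c * \<Theta> (i q)"
      using c \<Theta>0[of "i q"] by (intro mult_right_mono) (auto intro: mult_nonneg_nonneg)
    finally show ?thesis unfolding iq .
  qed
  have mem: "Tm M X f (q-1) (restrict i {1..q-1}) * Tm M X f (a-q) (\<lambda>k\<in>{1..a-q}. i (q+k))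
      \<le> (\<Sum>q\<in>{1..a}. Tm M X f (q-1) (restrict i {1..q-1}) * Tm M X f (a-q) (\<lambda>k\<in>{1..a-q}. i (q+k)))"
    by (rule member_le_sum) (use q in \<open>auto simp: Tm_def\<close>)
  have "Tm M X f a i = \<bar>cov M A B + (\<integral>\<omega>. A \<omega> \<partial>M) * (\<integral>\<omega>. B \<omega> \<partial>M)\<bar>"
    unfolding Tm_def cov_def AB by simp
  also have "\<dots> \<le> \<bar>cov M A B\<bar> + \<bar>\<integral>\<omega>. A \<omega> \<partial>M\<bar> * \<bar>\<integral>\<omega>. B \<omega> \<partial>M\<bar>"
    by (metis abs_mult abs_triangle_ineq)
  finally show ?thesis using cvq mem unfolding eA eB by linarith
qed

lemma card_max_level:
  assumes a: "1 \<le> a"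
  shows "card {i \<in> PiE {1..a} (\<lambda>_. {..<n}). Max (i ` {1..a}) = m} \<le> a * (m+1)^(a-1)"
proof -
  define P where "P = (\<lambda>q. PiE {1..a} (\<lambda>k. if k = q then {m} else {..m}))"
  have sub: "{i \<in> PiE {1..a} (\<lambda>_. {..<n}). Max (i ` {1..a}) = m} \<subseteq> (\<Union>q\<in>{1..a}. P q)"
  proof
    fix i assume "i \<in> {i \<in> PiE {1..a} (\<lambda>_. {..<n}). Max (i ` {1..a}) = m}"
    then have i: "i \<in> PiE {1..a} (\<lambda>_. {..<n})" and mx: "Max (i ` {1..a}) = m" by auto
    have "Max (i ` {1..a}) \<in> i ` {1..a}" using a by (intro Max_in) auto
    then obtain q where q: "q \<in> {1..a}" "i q = m" using mx by auto
    have le: "i k \<le> m" if "k \<in> {1..a}" for k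
      using mx that by (metis Max_ge finite_atLeastAtMost finite_imageI imageI)
    have "i \<in> P q" using i q le unfolding P_def by (auto simp: PiE_iff)
    then show "i \<in> (\<Union>q\<in>{1..a}. P q)" using q by auto
  qed
  have "card {i \<in> PiE {1..a} (\<lambda>_. {..<n}). Max (i ` {1..a}) = m} \<le> card (\<Union>q\<in>{1..a}. P q)"
    by (rule card_mono[OF _ sub]) (auto simp: P_def intro!: finite_PiE)
  also have "\<dots> \<le> (\<Sum>q\<in>{1..a}. card (P q))" by (rule card_UN_le) auto
  also have "\<dots> = (\<Sum>q\<in>{1..a}. (m+1)^(a-1))"
  proof (rule sum.cong[OF refl])
    fix q assume q: "q \<in> {1..a}"
    have "card (P q) = (\<Prod>k\<in>{1..a}. card (if k = q then {m} else {..m}))"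
      unfolding P_def by (rule card_PiE) simp
    also have "\<dots> = (\<Prod>k\<in>{1..a}. if k = q then 1 else m+1)" by (intro prod.cong) auto
    also have "\<dots> = (\<Prod>k\<in>{1..a}-{q}. if k = q then 1 else m+1)"
      by (subst prod.remove[of _ q]) (use q in auto)
    also have "\<dots> = (\<Prod>k\<in>{1..a}-{q}. m+1)" by (rule prod.cong) auto
    also have "\<dots> = (m+1)^(a-1)" using q by simp
    finally show "card (P q) = (m+1)^(a-1)" .
  qed
  also have "\<dots> = a * (m+1)^(a-1)" by simp
  finally show ?thesis .
qed

lemma partA:
  fixes \<Theta> :: "nat \<Rightarrow> real"
  assumes a: "1 \<le> a" and \<Theta>0: "\<And>k. 0 \<le> \<Theta> k"
  shows "(\<Sum>i\<in>PiE {1..a} (\<lambda>_. {..<n}). \<Theta> (Max (i ` {1..a}))) \<le> real a * (\<Sum>m<n. (real m + 1)^(a-1) * \<Theta> m)"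
proof -
  define B where "B = PiE {1..a} (\<lambda>_. {..<n::nat})"
  define Mx where "Mx = (\<lambda>i::nat\<Rightarrow>nat. Max (i ` {1..a}))"
  have fin: "finite B" unfolding B_def by (simp add: finite_PiE)
  have img: "Mx ` B \<subseteq> {..<n}"
  proof
    fix y assume "y \<in> Mx ` B"
    then obtain i where i: "i \<in> B" and y: "y = Mx i" by auto
    have "Mx i \<in> i ` {1..a}" unfolding Mx_def using a by (intro Max_in) auto
    then show "y \<in> {..<n}" using i y unfolding B_def by (auto simp: PiE_iff)
  qed
  have "(\<Sum>i\<in>B. \<Theta> (Mx i)) = (\<Sum>m\<in>{..<n}. \<Sum>i\<in>{i\<in>B. Mx i = m}. \<Theta> (Mx i))"
    by (rule sum.group[symmetric, OF fin _ img]) simp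
  also have "\<dots> = (\<Sum>m<n. real (card {i\<in>B. Mx i = m}) * \<Theta> m)"
  proof (rule sum.cong[OF refl])
    fix m
    have "(\<Sum>i\<in>{i\<in>B. Mx i = m}. \<Theta> (Mx i)) = (\<Sum>i\<in>{i\<in>B. Mx i = m}. \<Theta> m)"
      by (rule sum.cong) auto
    then show "(\<Sum>i\<in>{i\<in>B. Mx i = m}. \<Theta> (Mx i)) = real (card {i\<in>B. Mx i = m}) * \<Theta> m" by simp
  qed
  also have "\<dots> \<le> (\<Sum>m<n. real (a * (m+1)^(a-1)) * \<Theta> m)"
  proof (intro sum_mono mult_right_mono \<Theta>0)
    fix m show "real (card {i\<in>B. Mx i = m}) \<le> real (a * (m+1)^(a-1))"
      using card_max_level[OF a, of n m] unfolding B_def Mx_def by linarith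
  qed
  also have "\<dots> = real a * (\<Sum>m<n. (real m + 1)^(a-1) * \<Theta> m)"
    by (simp add: sum_distrib_left mult_ac add.commute)
  finally show ?thesis unfolding B_def Mx_def .
qed

lemma Bx_nonneg: "0 \<le> Bx M X f a n"
  unfolding Bx_def Tm_def by (intro sum_nonneg) auto

lemma Bx_zero:
  assumes "admissible M X G f"
  shows "Bx M X f 0 n = 0"
proof -
  have "{1..0::nat} = {}" by simp
  then have "Bx M X f 0 n = Tm M X f 0 (\<lambda>_. undefined)" unfolding Bx_def by simp
  also have "\<dots> = 0" using assms unfolding Tm_def istar_def admissible_def by simp
  finally show ?thesis .
qed

theorem lemma6:
  fixes M :: "'w measure" and X :: "nat \<Rightarrow> 'w \<Rightarrow> 'e::euclidean_space"
    and G :: "('e \<Rightarrow> real) set" and normG :: "('e \<Rightarrow> real) \<Rightarrow> real"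
    and \<Theta> :: "nat \<Rightarrow> real" and r :: real and p :: nat
  assumes "prob_space M"
    and "\<And>k. X k \<in> borel_measurable M"
    and "G \<subseteq> borel_measurable borel"
    and "\<And>f. f \<in> G \<Longrightarrow> 0 \<le> normG f"
    and "stationary M X"
    and "multiple_mixing M X G normG \<Theta> r"
    and "1 \<le> p"
    and "summable (\<lambda>i. real i ^ (p - 1) * \<Theta> i)"
  shows "\<exists>K::real. \<forall>n f. 1 \<le> n \<longrightarrow> admissible M X G f \<longrightarrow>
           I_sum M X f n p \<le> K * (\<Sum>i\<in>{1..nat \<lceil>real p / 2\<rceil>}.
              real n ^ (i - 1) * Lr_norm M r (\<lambda>\<omega>. f (X 0 \<omega>)) ^ i * normG f ^ i)"
proof -
  note X = assms(2) and st = assms(5)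
  from assms(6) have \<Theta>0: "\<And>k. 0 \<le> \<Theta> k" and mix: "\<forall>p\<ge>1. \<exists>K::real. \<forall>f i q. admissible M X G f \<longrightarrow> q \<in> {1..p} \<longrightarrow>
        \<bar>cov M (\<lambda>\<omega>. \<Prod>j\<in>{0..<q}. f (X (istar i j) \<omega>))
               (\<lambda>\<omega>. \<Prod>j\<in>{q..p}. f (X (istar i j) \<omega>))\<bar>
        \<le> K * Lr_norm M r (\<lambda>\<omega>. f (X 0 \<omega>)) * normG f * \<Theta> (i q)"
    unfolding multiple_mixing_def by auto
  define C where "C = suminf (\<lambda>m. (real m + 1)^(p-1) * \<Theta> m)"
  have summ: "summable (\<lambda>m. (real m + 1)^(p-1) * \<Theta> m)"
  proof (rule summable_comparison_test'[where N=1])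
    show "summable (\<lambda>m. 2^(p-1) * (real m ^ (p-1) * \<Theta> m))" using assms(8) by (rule summable_mult)
  next
    fix m :: nat assume "1 \<le> m"
    then have "real m + 1 \<le> 2 * real m" by simp
    then have "(real m + 1)^(p-1) \<le> (2*real m)^(p-1)" by (rule power_mono) simp
    then have "(real m + 1)^(p-1) * \<Theta> m \<le> (2*real m)^(p-1) * \<Theta> m"
      using \<Theta>0[of m] by (rule mult_right_mono)
    then show "norm ((real m + 1)^(p-1) * \<Theta> m) \<le> 2^(p-1) * (real m ^ (p-1) * \<Theta> m)"
      using \<Theta>0[of m] by (simp add: power_mult_distrib mult_ac)
  qed
  have C0: "0 \<le> C" unfolding C_def by (rule suminf_nonneg[OF summ]) (simp add: \<Theta>0)
  have partC: "real a * (\<Sum>m<n. (real m + 1)^(a-1) * \<Theta> m) \<le> real a * C" if "a \<le> p" for a n :: nat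
  proof -
    have "(\<Sum>m<n. (real m + 1)^(a-1) * \<Theta> m) \<le> (\<Sum>m<n. (real m + 1)^(p-1) * \<Theta> m)"
      using that by (intro sum_mono mult_right_mono power_increasing \<Theta>0) auto
    also have "\<dots> \<le> C" unfolding C_def by (rule sum_le_suminf[OF summ]) (auto simp: \<Theta>0)
    finally show ?thesis by (intro mult_left_mono) auto
  qed
  define cc where "cc = (\<lambda>f. Lr_norm M r (\<lambda>\<omega>. f (X 0 \<omega>)) * normG f)"
  have c0: "0 \<le> cc f" if "admissible M X G f" for f
    using that assms(4) unfolding cc_def admissible_def Lr_norm_def by auto
  have fm: "f \<in> borel_measurable borel" if "admissible M X G f" for f
    using that assms(3) unfolding admissible_def by auto
  have key: "\<exists>K\<ge>0. \<forall>n f. 1 \<le> n \<longrightarrow> admissible M X G f \<longrightarrow> Bx M X f a n \<le> K * Sb (cc f) a n"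
    if "a \<le> p" for a
    using that
  proof (induction a rule: less_induct)
    case (less a)
    show ?case
    proof (cases "a = 0")
      case True
      show ?thesis by (rule exI[of _ 0]) (auto simp: True Bx_zero)
    next
      case False
      then have a1: "1 \<le> a" by simp
      have "\<forall>b. \<exists>K. b < a \<longrightarrow> (K \<ge> 0 \<and> (\<forall>n f. 1 \<le> n \<longrightarrow> admissible M X G f \<longrightarrow> Bx M X f b n \<le> K * Sb (cc f) b n))"
        using less by (metis less_imp_le_nat order.trans)
      then obtain Kf where Kf: "\<And>b. b < a \<Longrightarrow> Kf b \<ge> 0 \<and> (\<forall>n f. 1 \<le> n \<longrightarrow> admissible M X G f \<longrightarrow> Bx M X f b n \<le> Kf b * Sb (cc f) b n)"
        by metis
      from mix a1 obtain Km where Km: "\<And>f i q. admissible M X G f \<Longrightarrow> q \<in> {1..a} \<Longrightarrow>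
        \<bar>cov M (\<lambda>\<omega>. \<Prod>j\<in>{0..<q}. f (X (istar i j) \<omega>))
               (\<lambda>\<omega>. \<Prod>j\<in>{q..a}. f (X (istar i j) \<omega>))\<bar>
        \<le> Km * Lr_norm M r (\<lambda>\<omega>. f (X 0 \<omega>)) * normG f * \<Theta> (i q)" by blast
      define K where "K = \<bar>Km\<bar> * (real a * C) + (\<Sum>q\<in>{1..a}. Kf (q-1) * Kf (a-q) * real (((q-1+1) div 2) * ((a-q+1) div 2)))"
      have K0: "0 \<le> K" unfolding K_def using C0 Kf
        by (intro add_nonneg_nonneg sum_nonneg mult_nonneg_nonneg) auto
      show ?thesis
      proof (intro exI[of _ K] conjI allI impI K0)
        fix n :: nat and f assume n: "1 \<le> n" and adm: "admissible M X G f"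
        define c where "c = cc f"
        have c0': "0 \<le> c" unfolding c_def using c0[OF adm] .
        define Bo where "Bo = PiE {1..a} (\<lambda>_. {..<n::nat})"
        have pt: "Tm M X f a i \<le> \<bar>Km\<bar> * c * \<Theta> (Max (i ` {1..a}))
           + (\<Sum>q\<in>{1..a}. Tm M X f (q-1) (restrict i {1..q-1}) * Tm M X f (a-q) (\<lambda>k\<in>{1..a-q}. i (q+k)))" for i
          by (rule per_tuple[OF st X fm[OF adm] a1 c0' \<Theta>0]) (use Km[OF adm] in \<open>simp add: c_def cc_def mult.assoc\<close>)
        have "Bx M X f a n \<le> (\<Sum>i\<in>Bo. \<bar>Km\<bar> * c * \<Theta> (Max (i ` {1..a}))
           + (\<Sum>q\<in>{1..a}. Tm M X f (q-1) (restrict i {1..q-1}) * Tm M X f (a-q) (\<lambda>k\<in>{1..a-q}. i (q+k))))"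
          unfolding Bx_def Bo_def by (intro sum_mono pt)
        also have "\<dots> = \<bar>Km\<bar> * c * (\<Sum>i\<in>Bo. \<Theta> (Max (i ` {1..a})))
           + (\<Sum>q\<in>{1..a}. \<Sum>i\<in>Bo. Tm M X f (q-1) (restrict i {1..q-1}) * Tm M X f (a-q) (\<lambda>k\<in>{1..a-q}. i (q+k)))"
          by (simp add: sum.distrib sum_distrib_left) (rule sum.swap)
        finally have S1: "Bx M X f a n \<le> \<bar>Km\<bar> * c * (\<Sum>i\<in>Bo. \<Theta> (Max (i ` {1..a})))
           + (\<Sum>q\<in>{1..a}. \<Sum>i\<in>Bo. Tm M X f (q-1) (restrict i {1..q-1}) * Tm M X f (a-q) (\<lambda>k\<in>{1..a-q}. i (q+k)))" .
        have S2: "(\<Sum>q\<in>{1..a}. \<Sum>i\<in>Bo. Tm M X f (q-1) (restrict i {1..q-1}) * Tm M X f (a-q) (\<lambda>k\<in>{1..a-q}. i (q+k)))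
            = (\<Sum>q\<in>{1..a}. real n * Bx M X f (q-1) n * Bx M X f (a-q) n)"
        proof (rule sum.cong[OF refl])
          fix q assume q: "q \<in> {1..a}"
          have "(\<Sum>i\<in>PiE {1..a} (\<lambda>_. {..<n}). Tm M X f (q-1) (restrict i {1..q-1}) * Tm M X f (a-q) (\<lambda>k\<in>{1..a-q}. i (q+k)))
            = real (card {..<n}) * (\<Sum>u\<in>PiE {1..q-1} (\<lambda>_. {..<n}). Tm M X f (q-1) u) * (\<Sum>v\<in>PiE {1..a-q} (\<lambda>_. {..<n}). Tm M X f (a-q) v)"
            by (rule sum_PiE_split) (use q in auto)
          then show "(\<Sum>i\<in>Bo. Tm M X f (q-1) (restrict i {1..q-1}) * Tm M X f (a-q) (\<lambda>k\<in>{1..a-q}. i (q+k)))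
            = real n * Bx M X f (q-1) n * Bx M X f (a-q) n"
            unfolding Bo_def Bx_def by simp
        qed
        have S3: "\<bar>Km\<bar> * c * (\<Sum>i\<in>Bo. \<Theta> (Max (i ` {1..a}))) \<le> \<bar>Km\<bar> * (real a * C) * Sb c a n"
        proof -
          have "(\<Sum>i\<in>Bo. \<Theta> (Max (i ` {1..a}))) \<le> real a * C"
            unfolding Bo_def using partA[where \<Theta>=\<Theta> and n=n, OF a1 \<Theta>0] partC[OF less.prems, where n=n] by linarith
          then have "\<bar>Km\<bar> * c * (\<Sum>i\<in>Bo. \<Theta> (Max (i ` {1..a}))) \<le> \<bar>Km\<bar> * c * (real a * C)"
            using c0' by (intro mult_left_mono) auto
          also have "\<dots> \<le> \<bar>Km\<bar> * Sb c a n * (real a * C)"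
            using Sb_ge_c[OF c0' a1, of n] C0 by (intro mult_right_mono mult_left_mono) auto
          finally show ?thesis by (simp add: mult_ac)
        qed
        have S4: "(\<Sum>q\<in>{1..a}. real n * Bx M X f (q-1) n * Bx M X f (a-q) n)
            \<le> (\<Sum>q\<in>{1..a}. Kf (q-1) * Kf (a-q) * real (((q-1+1) div 2) * ((a-q+1) div 2)) * Sb c a n)"
        proof (rule sum_mono)
          fix q assume q: "q \<in> {1..a}"
          have k1: "0 \<le> Kf (q-1)" "Bx M X f (q-1) n \<le> Kf (q-1) * Sb c (q-1) n"
            using Kf[of "q-1"] q n adm unfolding c_def by auto
          have k2: "0 \<le> Kf (a-q)" "Bx M X f (a-q) n \<le> Kf (a-q) * Sb c (a-q) n"
            using Kf[of "a-q"] q n adm unfolding c_def by auto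
          have "Bx M X f (q-1) n * Bx M X f (a-q) n \<le> (Kf (q-1) * Sb c (q-1) n) * (Kf (a-q) * Sb c (a-q) n)"
            using k1 k2 Bx_nonneg Sb_nonneg[OF c0'] by (intro mult_mono) auto
          then have "real n * Bx M X f (q-1) n * Bx M X f (a-q) n \<le> real n * ((Kf (q-1) * Sb c (q-1) n) * (Kf (a-q) * Sb c (a-q) n))"
            by (simp add: mult.assoc mult_left_mono)
          also have "\<dots> = Kf (q-1) * Kf (a-q) * (real n * Sb c (q-1) n * Sb c (a-q) n)" by (simp add: mult_ac)
          also have "\<dots> \<le> Kf (q-1) * Kf (a-q) * (real (((q-1+1) div 2) * ((a-q+1) div 2)) * Sb c a n)"
            using Sb_prod[OF c0', of "q-1" "a-q" a n] q k1 k2 by (intro mult_left_mono) auto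
          finally show "real n * Bx M X f (q-1) n * Bx M X f (a-q) n
              \<le> Kf (q-1) * Kf (a-q) * real (((q-1+1) div 2) * ((a-q+1) div 2)) * Sb c a n"
            by (simp add: mult_ac)
        qed
        have S5: "\<bar>Km\<bar> * (real a * C) * Sb c a n + (\<Sum>q\<in>{1..a}. Kf (q-1) * Kf (a-q) * real (((q-1+1) div 2) * ((a-q+1) div 2)) * Sb c a n)
            = K * Sb c a n" unfolding K_def by (simp add: algebra_simps sum_distrib_left sum_distrib_right)
        show "Bx M X f a n \<le> K * Sb (cc f) a n" using S1 S2 S3 S4 S5 unfolding c_def by linarith
      qed
    qed
  qed
  obtain K where K: "\<And>n f. 1 \<le> n \<Longrightarrow> admissible M X G f \<Longrightarrow> Bx M X f p n \<le> K * Sb (cc f) p n"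
    using key[of p] by auto
  show ?thesis
  proof (intro exI[of _ K] allI impI)
    fix n :: nat and f assume n: "1 \<le> n" and adm: "admissible M X G f"
    have "I_sum M X f n p \<le> Bx M X f p n"
      unfolding I_sum_def Bx_def Tm_def
      by (rule sum_mono2) (auto simp: finite_PiE)
    also have "\<dots> \<le> K * Sb (cc f) p n" by (rule K[OF n adm])
    also have "Sb (cc f) p n = (\<Sum>i\<in>{1..nat \<lceil>real p / 2\<rceil>}.
              real n ^ (i - 1) * Lr_norm M r (\<lambda>\<omega>. f (X 0 \<omega>)) ^ i * normG f ^ i)"
      unfolding Sb_def nat_ceil_half cc_def by (simp add: power_mult_distrib mult.assoc)
    finally show "I_sum M X f n p \<le> K * (\<Sum>i\<in>{1..nat \<lceil>real p / 2\<rceil>}.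
              real n ^ (i - 1) * Lr_norm M r (\<lambda>\<omega>. f (X 0 \<omega>)) ^ i * normG f ^ i)" .
  qed
qed

end
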